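(* Let $U\in\mathbb{R}^{d\times n}$ be a frame, $z\in\mathbb{R}^n_{++}$, $c\in\mathbb{R}^n_{++}$ with $\langle c,1_n\rangle=d$, let $\emptyset\ne T\subsetneq[n]$, and let $h:=h^{U,z}_T$. Then: (1) $h$ is an increasing function of $\alpha$; (2) $\lim_{\alpha\to\infty}h(\alpha)=\operatorname{rk}(U_T)$; (3) $\langle c,1_T\rangle-h(1)\ge\gamma$, where $\gamma$ is the margin of $T$; (4) if $\operatorname{rk}(U_T)\ge\langle c,1_T\rangle$, then for the margin $\gamma$ of $T$ and any $\delta\in[0,\gamma)$, there is a finite solution $\alpha<\infty$ (with $\alpha\ge1$) to the equation $h(\alpha)=h(1)+\delta$.
   Context: A frame is a full row rank matrix $U=(u_1,\dots,u_n)\in\mathbb{R}^{d\times n}$; $U_T,Z_T$ denote restrictions to $T$, $\bar T=[n]\setminus T$, $Z=\mathrm{diag}(z)$, $1_T$ the indicator of $T$, $\circ$ the entrywise product. $\mathrm{lev}^U_j(z):=z_ju_j^{\mathsf T}(UZU^{\mathsf T})^{-1}u_j$. Margin of $T$: the largest $\gamma\ge0$ such that some $\nu\in\mathbb{R}$ satisfies $\max_{j\in T}(\mathrm{lev}^U_j(z)-c_j)\le\nu-\gamma\le\nu+\gamma\le\min_{j\notin T}(\mathrm{lev}^U_j(z)-c_j)$. Progress function: $h^{U,z}_T(\alpha):=\sum_{j\in T}\mathrm{lev}^U_j(z\circ(1_{\bar T}+\alpha1_T))=\mathrm{tr}[\alpha U_TZ_TU_T^{\mathsf T}(U_{\bar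 T}Z_{\bar T}U_{\bar T}^{\mathsf T}+\alpha U_TZ_TU_T^{\mathsf T})^{-1}]$ for $\alpha>0$. *)

theory Defs
  imports "HOL-Analysis.Analysis"
begin

text \<open>Matrices U :: real^'n^'d are d x n (rows indexed by 'd, columns by 'n).\<close>

definition diag_mat :: "real^'n \<Rightarrow> real^'n^'n" where
  "diag_mat z = (\<chi> i j. if i = j then z $ i else 0)"

definition is_frame :: "real^'n^'d \<Rightarrow> bool" where
  "is_frame U \<longleftrightarrow> rank U = CARD('d)"

text \<open>Restriction U_T, represented by zeroing the columns outside T (same rank).\<close>
definition restrict_cols :: "real^'n^'d \<Rightarrow> 'n set \<Rightarrow> real^'n^'d" where
  "restrict_cols U T = (\<chi> i j. if j \<in> T then U $ i $ j else 0)"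

definition ind_vec :: "'n set \<Rightarrow> real^'n" where
  "ind_vec T = (\<chi> j. if j \<in> T then 1 else 0)"

definition lev :: "real^'n^'d \<Rightarrow> real^'n \<Rightarrow> 'n \<Rightarrow> real" where
  "lev U z j = z $ j * (column j U \<bullet>
      (matrix_inv (U ** diag_mat z ** transpose U) *v column j U))"

definition progress :: "real^'n^'d \<Rightarrow> real^'n \<Rightarrow> 'n set \<Rightarrow> real \<Rightarrow> real" where
  "progress U z T \<alpha> =
     (\<Sum>j\<in>T. lev U (\<chi> k. z $ k * (ind_vec (- T) $ k + \<alpha> * ind_vec T $ k)) j)"

definition margin_feasible :: "real^'n^'d \<Rightarrow> real^'n \<Rightarrow> real^'n \<Rightarrow> 'n set \<Rightarrow> real \<Rightarrow> bool" where
  "margin_feasible U z c T \<gamma> \<longleftrightarrow> \<gamma> \<ge> 0 \<and>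
     (\<exists>\<nu>. Max ((\<lambda>j. lev U z j - c $ j) ` T) \<le> \<nu> - \<gamma> \<and> \<nu> - \<gamma> \<le> \<nu> + \<gamma> \<and>
          \<nu> + \<gamma> \<le> Min ((\<lambda>j. lev U z j - c $ j) ` (- T)))"

definition is_margin :: "real^'n^'d \<Rightarrow> real^'n \<Rightarrow> real^'n \<Rightarrow> 'n set \<Rightarrow> real \<Rightarrow> bool" where
  "is_margin U z c T \<gamma> \<longleftrightarrow> margin_feasible U z c T \<gamma> \<and>
     (\<forall>\<gamma>'. margin_feasible U z c T \<gamma>' \<longrightarrow> \<gamma>' \<le> \<gamma>)"

end

theory Submission imports Defs "HOL-Real_Asymp.Real_Asymp" begin

definition Mw :: "real^'n^'d \<Rightarrow> real^'n \<Rightarrow> real^'d^'d" where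
  "Mw U w = U ** diag_mat w ** transpose U"

definition Nw :: "real^'n^'d \<Rightarrow> real^'n \<Rightarrow> real^'d^'d" where
  "Nw U w = matrix_inv (Mw U w)"

lemma Mw_apply: "Mw U w *v x = (\<Sum>j\<in>UNIV. (w$j * (column j U \<bullet> x)) *\<^sub>R column j U)"
  apply (simp add: Mw_def vec_eq_iff matrix_vector_mult_def matrix_matrix_mult_def diag_mat_def
      transpose_def column_def inner_vec_def sum_distrib_left sum_distrib_right if_distrib
      cong: if_cong)
  apply (intro allI)
  apply (subst sum.swap)
  apply (intro sum.cong refl)
  apply (simp add: ac_simps)
  done

lemma Mw_quad: "y \<bullet> (Mw U w *v x) = (\<Sum>j\<in>UNIV. w$j * (column j U \<bullet> x) * (column j U \<bullet> y))"
  by (simp add: Mw_apply inner_sum_right inner_commute)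

lemma Mw_quad2: "x \<bullet> (Mw U w *v x) = (\<Sum>j\<in>UNIV. w$j * (column j U \<bullet> x)\<^sup>2)"
  by (simp add: Mw_quad power2_eq_square mult.assoc)

lemma Mw_sym: "(Mw U w *v x) \<bullet> y = x \<bullet> (Mw U w *v y)"
  by (simp add: Mw_quad inner_commute[of _ y] mult_ac)

lemma Mw_nonneg: "(\<And>j. 0 \<le> w$j) \<Longrightarrow> 0 \<le> x \<bullet> (Mw U w *v x)"
  unfolding Mw_quad2 by (intro sum_nonneg mult_nonneg_nonneg) auto

lemma Mw_mono:
  assumes "\<And>j. w$j \<le> w'$j"
  shows "x \<bullet> (Mw U w *v x) \<le> x \<bullet> (Mw U w' *v x)"
  unfolding Mw_quad2 by (intro sum_mono mult_right_mono assms) simp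

context
  fixes U :: "real^'n^'d" and w :: "real^'n"
  assumes surjU: "surj ((*v) U)" and wpos: "\<forall>j. w$j > 0"
begin

lemma Mw_ker: "Mw U w *v x = 0 \<Longrightarrow> x = 0"
proof -
  assume h: "Mw U w *v x = 0"
  have "(\<Sum>j\<in>UNIV. w$j * (column j U \<bullet> x)\<^sup>2) = 0"
    using Mw_quad2[of x U w] h by simp
  moreover have nn: "\<And>j. 0 \<le> w$j * (column j U \<bullet> x)\<^sup>2" using wpos by (simp add: less_imp_le)
  ultimately have "\<forall>j\<in>UNIV. w$j * (column j U \<bullet> x)\<^sup>2 = 0"
    using sum_nonneg_eq_0_iff[of UNIV "\<lambda>j. w$j * (column j U \<bullet> x)\<^sup>2"] by simp
  then have z: "\<And>j. column j U \<bullet> x = 0" using wpos by (metis UNIV_I mult_eq_0_iff power_eq_0_iff less_irrefl)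
  obtain y where y: "x = U *v y" using surjU by (metis surjD)
  have "x \<bullet> x = (\<Sum>j\<in>UNIV. y$j * (x \<bullet> column j U))"
    by (subst (2) y) (simp add: matrix_mult_sum inner_sum_right scalar_mult_eq_scaleR)
  also have "\<dots> = 0" using z by (simp add: inner_commute)
  finally show "x = 0" by simp
qed

lemma Mw_invertible: "invertible (Mw U w)"
  unfolding invertible_left_inverse matrix_left_invertible_ker using Mw_ker by blast

lemma MN_mat: "Mw U w ** Nw U w = mat 1 \<and> Nw U w ** Mw U w = mat 1"
  using Mw_invertible unfolding Nw_def matrix_inv_def invertible_def by (rule someI_ex)

lemma MN: "Mw U w *v (Nw U w *v x) = x"
  using MN_mat by (simp add: matrix_vector_mul_assoc)

lemma NM: "Nw U w *v (Mw U w *v x) = x"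
  using MN_mat by (simp add: matrix_vector_mul_assoc)

lemma N_sym: "(Nw U w *v x) \<bullet> y = x \<bullet> (Nw U w *v y)"
proof -
  have "(Nw U w *v x) \<bullet> y = (Nw U w *v x) \<bullet> (Mw U w *v (Nw U w *v y))" by (simp add: MN)
  also have "\<dots> = (Mw U w *v (Nw U w *v x)) \<bullet> (Nw U w *v y)" by (simp add: Mw_sym)
  finally show ?thesis by (simp add: MN)
qed

lemma N_quad: "x \<bullet> (Nw U w *v x) = (Nw U w *v x) \<bullet> (Mw U w *v (Nw U w *v x))"
  by (simp add: MN inner_commute)

lemma N_psd: "0 \<le> x \<bullet> (Nw U w *v x)"
  unfolding N_quad using wpos by (intro Mw_nonneg) (simp add: less_imp_le)

lemma N_var: "2 * (x \<bullet> y) - y \<bullet> (Mw U w *v y) \<le> x \<bullet> (Nw U w *v x)"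
proof -
  define p where "p = Nw U w *v x"
  have "0 \<le> (y - p) \<bullet> (Mw U w *v (y - p))"
    using wpos by (intro Mw_nonneg) (simp add: less_imp_le)
  also have "\<dots> = y \<bullet> (Mw U w *v y) - 2 * (x \<bullet> y) + x \<bullet> p"
    by (simp add: matrix_vector_right_distrib matrix_vector_mult_diff_distrib inner_diff_left inner_diff_right
         p_def MN Mw_sym[of U w _ y] inner_commute[of y x])
       (simp add: Mw_sym MN inner_commute)
  finally show ?thesis by (simp add: p_def)
qed

lemma N_cs:
  assumes "t > 0"
  shows "2 * t * \<bar>(Nw U w *v x) \<bullet> y\<bar> \<le> t\<^sup>2 * (x \<bullet> (Nw U w *v x)) + y \<bullet> (Nw U w *v y)"
proof -
  have e: "(t *\<^sub>R x + s *\<^sub>R y) \<bullet> (Nw U w *v (t *\<^sub>R x + s *\<^sub>R y))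
     = t\<^sup>2 * (x \<bullet> (Nw U w *v x)) + 2 * t * s * ((Nw U w *v x) \<bullet> y) + s\<^sup>2 * (y \<bullet> (Nw U w *v y))" for s
    by (simp add: matrix_vector_right_distrib matrix_vector_mult_scaleR inner_add_left inner_add_right
       N_sym[of y x] inner_commute[of x "Nw U w *v y"] inner_commute[of y "Nw U w *v x"] power2_eq_square algebra_simps)
  have "0 \<le> t\<^sup>2 * (x \<bullet> (Nw U w *v x)) + 2 * t * 1 * ((Nw U w *v x) \<bullet> y) + 1\<^sup>2 * (y \<bullet> (Nw U w *v y))"
    using N_psd[of "t *\<^sub>R x + 1 *\<^sub>R y"] e[of 1] by simp
  moreover have "0 \<le> t\<^sup>2 * (x \<bullet> (Nw U w *v x)) + 2 * t * (-1) * ((Nw U w *v x) \<bullet> y) + (-1)\<^sup>2 * (y \<bullet> (Nw U w *v y))"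
    using N_psd[of "t *\<^sub>R x + (-1) *\<^sub>R y"] e[of "-1"] by simp
  ultimately show ?thesis using assms by (simp add: abs_if)
qed

lemma N_eq: "x \<bullet> (Nw U w *v x) = 2 * (x \<bullet> (Nw U w *v x)) - (Nw U w *v x) \<bullet> (Mw U w *v (Nw U w *v x))"
  using N_quad by simp

end

lemma expand_sum:
  fixes f :: "'a::real_inner \<Rightarrow> 'a"
  assumes fin: "finite E" and ex: "\<And>x. (\<Sum>b\<in>E. (x \<bullet> b) *\<^sub>R b) = x"
    and sym: "\<And>x y. f x \<bullet> y = x \<bullet> f y" and finS: "finite S"
  shows "(\<Sum>j\<in>S. c j * (u j \<bullet> f (u j))) = (\<Sum>b\<in>E. f b \<bullet> (\<Sum>j\<in>S. (c j * (b \<bullet> u j)) *\<^sub>R u j))"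
proof -
  have "u j \<bullet> f (u j) = (\<Sum>b\<in>E. (u j \<bullet> b) * (f b \<bullet> u j))" for j
  proof -
    have "u j \<bullet> f (u j) = (\<Sum>b\<in>E. (u j \<bullet> b) *\<^sub>R b) \<bullet> f (u j)" by (simp add: ex)
    also have "\<dots> = (\<Sum>b\<in>E. (u j \<bullet> b) * (b \<bullet> f (u j)))" by (simp add: inner_sum_left)
    finally show ?thesis by (simp add: sym)
  qed
  then have "(\<Sum>j\<in>S. c j * (u j \<bullet> f (u j))) = (\<Sum>j\<in>S. \<Sum>b\<in>E. c j * ((u j \<bullet> b) * (f b \<bullet> u j)))"
    by (simp add: sum_distrib_left)
  also have "\<dots> = (\<Sum>b\<in>E. \<Sum>j\<in>S. c j * ((u j \<bullet> b) * (f b \<bullet> u j)))" by (rule sum.swap)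
  also have "\<dots> = (\<Sum>b\<in>E. f b \<bullet> (\<Sum>j\<in>S. (c j * (b \<bullet> u j)) *\<^sub>R u j))"
    by (simp add: inner_sum_right inner_commute mult_ac)
  finally show ?thesis .
qed


definition wa :: "real^'n \<Rightarrow> 'n set \<Rightarrow> real \<Rightarrow> real^'n" where
  "wa z T \<alpha> = (\<chi> k. z $ k * (ind_vec (- T) $ k + \<alpha> * ind_vec T $ k))"

lemma wa_nth: "wa z T \<alpha> $ k = (if k \<in> T then \<alpha> * z$k else z$k)"
  by (simp add: wa_def ind_vec_def)

lemma wa_1: "wa z T 1 = z"
  by (simp add: vec_eq_iff wa_nth)

lemma progress_wa: "progress U z T \<alpha> = (\<Sum>j\<in>T. lev U (wa z T \<alpha>) j)"
  by (simp add: progress_def wa_def)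

lemma lev_Nw: "lev U w j = w$j * (column j U \<bullet> (Nw U w *v column j U))"
  by (simp add: lev_def Nw_def Mw_def)

lemma sum_split_T: "(\<Sum>j\<in>UNIV. f j) = (\<Sum>j\<in>T. f j) + (\<Sum>j\<in>UNIV. if j \<in> T then 0 else f j)"
  for f :: "'n::finite \<Rightarrow> real"
proof -
  have "(\<Sum>j\<in>UNIV. f j) = (\<Sum>j\<in>UNIV. (if j \<in> T then f j else 0) + (if j \<in> T then 0 else f j))"
    by (intro sum.cong) auto
  also have "\<dots> = (\<Sum>j\<in>T. f j) + (\<Sum>j\<in>UNIV. if j \<in> T then 0 else f j)"
    by (simp add: sum.distrib sum.inter_restrict[symmetric])
  finally show ?thesis .
qed

lemma Mw_wa_quad: "y \<bullet> (Mw U (wa z T \<alpha>) *v y) =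
   (\<Sum>j\<in>UNIV. if j \<in> T then 0 else z$j * (column j U \<bullet> y)\<^sup>2) + \<alpha> * (\<Sum>j\<in>T. z$j * (column j U \<bullet> y)\<^sup>2)"
  unfolding Mw_quad2 wa_nth
  by (subst sum_split_T[of _ T]) (simp add: sum_distrib_left mult_ac cong: if_cong)

context
  fixes U :: "real^'n^'d" and z :: "real^'n" and T :: "'n set"
  assumes surjU: "surj ((*v) U)" and zpos: "\<forall>j. z$j > 0"
begin

lemma wa_pos: "\<alpha> > 0 \<Longrightarrow> \<forall>k. wa z T \<alpha> $ k > 0"
  using zpos by (simp add: wa_nth)

abbreviation "q \<alpha> x \<equiv> x \<bullet> (Nw U (wa z T \<alpha>) *v x)"

lemma q_mono:
  assumes "0 < \<alpha>" "\<alpha> \<le> \<beta>"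
  shows "q \<beta> x \<le> q \<alpha> x"
proof -
  have pa: "\<forall>k. wa z T \<alpha> $ k > 0" and pb: "\<forall>k. wa z T \<beta> $ k > 0" using assms wa_pos by auto
  define y where "y = Nw U (wa z T \<beta>) *v x"
  have "q \<beta> x = 2 * (x \<bullet> y) - y \<bullet> (Mw U (wa z T \<beta>) *v y)"
    unfolding y_def by (rule N_eq[OF surjU pb])
  also have "\<dots> \<le> 2 * (x \<bullet> y) - y \<bullet> (Mw U (wa z T \<alpha>) *v y)"
    using Mw_mono[of "wa z T \<alpha>" "wa z T \<beta>" y U] assms zpos
    by (auto simp: wa_nth intro: mult_right_mono less_imp_le)
  also have "\<dots> \<le> q \<alpha> x" by (rule N_var[OF surjU pa])
  finally show ?thesis .
qed

lemma q_lip: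
  assumes "1 \<le> \<alpha>" "\<alpha> \<le> \<beta>"
  shows "q \<alpha> x - q \<beta> x \<le> (\<beta> - \<alpha>) * q 1 x"
proof -
  have pa: "\<forall>k. wa z T \<alpha> $ k > 0" and pb: "\<forall>k. wa z T \<beta> $ k > 0" using assms wa_pos by auto
  define y where "y = Nw U (wa z T \<alpha>) *v x"
  define Bq where "Bq = (\<Sum>j\<in>T. z$j * (column j U \<bullet> y)\<^sup>2)"
  define Aq where "Aq = (\<Sum>j\<in>UNIV. if j \<in> T then 0 else z$j * (column j U \<bullet> y)\<^sup>2)"
  have Bq0: "0 \<le> Bq" unfolding Bq_def using zpos by (intro sum_nonneg mult_nonneg_nonneg) (auto intro: less_imp_le)
  have Aq0: "0 \<le> Aq" unfolding Aq_def using zpos by (intro sum_nonneg) (simp add: less_imp_le)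
  have qa: "q \<alpha> x = 2 * (x \<bullet> y) - (Aq + \<alpha> * Bq)"
    unfolding y_def Aq_def Bq_def Mw_wa_quad[symmetric] by (rule N_eq[OF surjU pa])
  have qa2: "q \<alpha> x = Aq + \<alpha> * Bq"
    unfolding y_def Aq_def Bq_def Mw_wa_quad[symmetric] by (rule N_quad[OF surjU pa])
  have "2 * (x \<bullet> y) - (Aq + \<beta> * Bq) \<le> q \<beta> x"
    using N_var[OF surjU pb, of x y] unfolding Mw_wa_quad Aq_def Bq_def by simp
  then have "q \<alpha> x - q \<beta> x \<le> (\<beta> - \<alpha>) * Bq" using qa by (simp add: algebra_simps)
  also have "\<dots> \<le> (\<beta> - \<alpha>) * q \<alpha> x"
    using qa2 assms Bq0 Aq0 mult_right_mono[of 1 \<alpha> Bq] by (intro mult_left_mono) auto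
  also have "\<dots> \<le> (\<beta> - \<alpha>) * q 1 x"
    using assms q_mono[of 1 \<alpha> x] by (intro mult_left_mono) auto
  finally show ?thesis .
qed

lemma total_E:
  fixes E :: "(real^'d) set"
  assumes "\<alpha> > 0" and fin: "finite E" and ex: "\<And>x. (\<Sum>b\<in>E. (x \<bullet> b) *\<^sub>R b) = x"
    and nrm: "\<And>b. b \<in> E \<Longrightarrow> b \<bullet> b = 1"
  shows "(\<Sum>j\<in>UNIV. wa z T \<alpha> $ j * q \<alpha> (column j U)) = real (card E)"
proof -
  have p: "\<forall>k. wa z T \<alpha> $ k > 0" using assms wa_pos by auto
  have "(\<Sum>j\<in>UNIV. wa z T \<alpha> $ j * q \<alpha> (column j U)) =
     (\<Sum>b\<in>E. (Nw U (wa z T \<alpha>) *v b) \<bullet> (\<Sum>j\<in>UNIV. (wa z T \<alpha> $ j * (b \<bullet> column j U)) *\<^sub>R column j U))"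
    by (rule expand_sum[OF fin ex N_sym[OF surjU p]]) simp
  also have "\<dots> = (\<Sum>b\<in>E. (Nw U (wa z T \<alpha>) *v b) \<bullet> (Mw U (wa z T \<alpha>) *v b))"
    by (simp add: Mw_apply inner_commute)
  also have "\<dots> = (\<Sum>b\<in>E. b \<bullet> b)"
    by (simp add: N_sym[OF surjU p] NM[OF surjU p])
  also have "\<dots> = (\<Sum>b\<in>E. 1)"
    using nrm by simp
  finally show ?thesis by simp
qed


definition g :: "real \<Rightarrow> real" where
  "g \<alpha> = (\<Sum>j\<in>UNIV. if j \<in> T then 0 else z$j * q \<alpha> (column j U))"

lemma h_eq:
  assumes "\<alpha> > 0"
  shows "progress U z T \<alpha> = real CARD('d) - g \<alpha>"
proof -
  have "(\<Sum>j\<in>UNIV. wa z T \<alpha> $ j * q \<alpha> (column j U)) = real (card (Basis :: (real^'d) set))"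
    by (rule total_E[OF assms]) (auto simp: euclidean_representation inner_Basis)
  also have "\<dots> = real CARD('d)" by simp
  finally have t: "(\<Sum>j\<in>UNIV. wa z T \<alpha> $ j * q \<alpha> (column j U)) = real CARD('d)" .
  have "(\<Sum>j\<in>UNIV. wa z T \<alpha> $ j * q \<alpha> (column j U)) = progress U z T \<alpha> + g \<alpha>"
    unfolding progress_wa lev_Nw g_def
    by (subst sum_split_T[of _ T]) (simp add: wa_nth cong: if_cong)
  with t show ?thesis by simp
qed

lemma g_mono: "0 < \<alpha> \<Longrightarrow> \<alpha> \<le> \<beta> \<Longrightarrow> g \<beta> \<le> g \<alpha>"
  unfolding g_def using zpos q_mono
  by (intro sum_mono) (auto intro!: mult_left_mono less_imp_le)

lemma g_lip: "1 \<le> \<alpha> \<Longrightarrow> \<alpha> \<le> \<beta> \<Longrightarrow> g \<alpha> - g \<beta> \<le> (\<beta> - \<alpha>) * g 1"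
proof -
  assume a: "1 \<le> \<alpha>" "\<alpha> \<le> \<beta>"
  have "g \<alpha> - g \<beta> = (\<Sum>j\<in>UNIV. if j \<in> T then 0 else z$j * (q \<alpha> (column j U) - q \<beta> (column j U)))"
    unfolding g_def by (simp add: sum_subtractf[symmetric] right_diff_distrib if_distrib cong: if_cong)
  also have "\<dots> \<le> (\<Sum>j\<in>UNIV. if j \<in> T then 0 else z$j * ((\<beta> - \<alpha>) * q 1 (column j U)))"
    using zpos q_lip[OF a] by (intro sum_mono) (auto intro!: mult_left_mono less_imp_le)
  also have "\<dots> = (\<beta> - \<alpha>) * g 1"
    unfolding g_def by (simp add: sum_distrib_left if_distrib mult_ac cong: if_cong)
  finally show ?thesis .
qed

lemma g_cont: "continuous_on {1..} g"
proof -
  have g10: "0 \<le> g 1"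
    unfolding g_def using zpos N_psd[OF surjU wa_pos[of 1]]
    by (intro sum_nonneg) (auto intro!: mult_nonneg_nonneg simp: less_imp_le)
  have "(g 1)-lipschitz_on {1..} g"
  proof (rule lipschitz_onI)
    fix x y :: real assume xy: "x \<in> {1..}" "y \<in> {1..}"
    show "dist (g x) (g y) \<le> g 1 * dist x y"
    proof (cases "x \<le> y")
      case True
      then show ?thesis using g_lip[of x y] g_mono[of x y] xy
        by (simp add: dist_real_def abs_if mult.commute)
    next
      case False
      then show ?thesis using g_lip[of y x] g_mono[of y x] xy
        by (simp add: dist_real_def abs_if mult.commute)
    qed
  qed (rule g10)
  then show ?thesis by (rule lipschitz_on_continuous_on)
qed


lemma R_apply: "restrict_cols U T *v c = (\<Sum>j\<in>T. c$j *\<^sub>R column j U)"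
proof -
  have "restrict_cols U T *v c = (\<Sum>j\<in>UNIV. c$j *s column j (restrict_cols U T))"
    by (rule matrix_mult_sum)
  also have "\<dots> = (\<Sum>j\<in>UNIV. if j \<in> T then c$j *\<^sub>R column j U else 0)"
    by (intro sum.cong) (auto simp: column_def restrict_cols_def vec_eq_iff scalar_mult_eq_scaleR)
  also have "\<dots> = (\<Sum>j\<in>T. c$j *\<^sub>R column j U)"
    by (simp add: sum.If_cases)
  finally show ?thesis .
qed

definition VV where "VV = range ((*v) (restrict_cols U T))"

lemma VV_subspace: "subspace VV"
  unfolding VV_def by (intro linear_subspace_image) auto

lemma u_in_VV: "j \<in> T \<Longrightarrow> column j U \<in> VV"
proof -
  assume j: "j \<in> T"
  have "restrict_cols U T *v axis j 1 = column j U"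
  proof -
    have "(\<Sum>k\<in>T. (axis j 1 $ k) *\<^sub>R column k U) = (\<Sum>k\<in>T. if k = j then column k U else 0)"
      by (intro sum.cong) (auto simp: axis_def)
    then show ?thesis unfolding R_apply using j by simp
  qed
  then show ?thesis unfolding VV_def by (metis rangeI)
qed

definition Av :: "real^'d \<Rightarrow> real^'d" where
  "Av b = (\<Sum>j\<in>UNIV. ((if j \<in> T then 0 else z$j) * (b \<bullet> column j U)) *\<^sub>R column j U)"

lemma g_E:
  fixes E :: "(real^'d) set"
  assumes "\<alpha> > 0" and fin: "finite E" and ex: "\<And>x. (\<Sum>b\<in>E. (x \<bullet> b) *\<^sub>R b) = x"
  shows "g \<alpha> = (\<Sum>b\<in>E. (Nw U (wa z T \<alpha>) *v b) \<bullet> Av b)"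
proof -
  have p: "\<forall>k. wa z T \<alpha> $ k > 0" using assms wa_pos by auto
  have "g \<alpha> = (\<Sum>j\<in>UNIV. (if j \<in> T then 0 else z$j) * q \<alpha> (column j U))"
    unfolding g_def by (intro sum.cong) auto
  also have "\<dots> = (\<Sum>b\<in>E. (Nw U (wa z T \<alpha>) *v b) \<bullet> Av b)"
    unfolding Av_def by (rule expand_sum[OF fin ex N_sym[OF surjU p]]) simp
  finally show ?thesis .
qed

lemma W_term:
  assumes "\<alpha> > 0" "b \<in> orthogonal_comp VV" "b \<bullet> b = 1"
  shows "(Nw U (wa z T \<alpha>) *v b) \<bullet> Av b = 1"
proof -
  have p: "\<forall>k. wa z T \<alpha> $ k > 0" using assms wa_pos by auto
  have o: "column j U \<bullet> b = 0" if "j \<in> T" for j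
    using assms(2) u_in_VV[OF that] by (auto simp: orthogonal_comp_def orthogonal_def)
  have "Av b = Mw U (wa z T \<alpha>) *v b"
    unfolding Av_def Mw_apply using o by (intro sum.cong) (auto simp: wa_nth inner_commute)
  then show ?thesis using assms by (simp add: N_sym[OF surjU p] NM[OF surjU p])
qed

lemma qV:
  assumes "\<alpha> > 0" "b = (\<Sum>j\<in>T. c$j *\<^sub>R column j U)"
  shows "q \<alpha> b \<le> (\<Sum>j\<in>T. (c$j)\<^sup>2 / z$j) / \<alpha>"
proof -
  have p: "\<forall>k. wa z T \<alpha> $ k > 0" using assms wa_pos by auto
  define y where "y = Nw U (wa z T \<alpha>) *v b"
  define Bq where "Bq = (\<Sum>j\<in>T. z$j * (column j U \<bullet> y)\<^sup>2)"
  define Aq where "Aq = (\<Sum>j\<in>UNIV. if j \<in> T then 0 else z$j * (column j U \<bullet> y)\<^sup>2)"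
  have Aq0: "0 \<le> Aq" unfolding Aq_def using zpos by (intro sum_nonneg) (simp add: less_imp_le)
  have qa: "q \<alpha> b = 2 * (b \<bullet> y) - (Aq + \<alpha> * Bq)"
    unfolding y_def Aq_def Bq_def Mw_wa_quad[symmetric] by (rule N_eq[OF surjU p])
  have hby: "b \<bullet> y = (\<Sum>j\<in>T. c$j * (column j U \<bullet> y))"
    by (simp add: assms(2) inner_sum_left)
  have "q \<alpha> b \<le> (\<Sum>j\<in>T. 2 * c$j * (column j U \<bullet> y) - \<alpha> * (z$j * (column j U \<bullet> y)\<^sup>2))"
    using qa Aq0 by (simp add: hby Bq_def sum_distrib_left sum_subtractf mult.assoc)
  also have "\<dots> \<le> (\<Sum>j\<in>T. (c$j)\<^sup>2 / z$j / \<alpha>)"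
  proof (intro sum_mono)
    fix j assume "j \<in> T"
    have zj: "z$j > 0" using zpos by auto
    define s where "s = column j U \<bullet> y"
    have "(c$j)\<^sup>2 / z$j / \<alpha> - (2 * c$j * s - \<alpha> * (z$j * s\<^sup>2)) = (c$j - \<alpha> * z$j * s)\<^sup>2 / (\<alpha> * z$j)"
      using zj assms(1) by (simp add: field_simps power2_eq_square)
    also have "\<dots> \<ge> 0" using zj assms(1) by simp
    finally show "2 * c$j * (column j U \<bullet> y) - \<alpha> * (z$j * (column j U \<bullet> y)\<^sup>2) \<le> (c$j)\<^sup>2 / z$j / \<alpha>"
      unfolding s_def by simp
  qed
  also have "\<dots> = (\<Sum>j\<in>T. (c$j)\<^sup>2 / z$j) / \<alpha>" by (simp add: sum_divide_distrib)
  finally show ?thesis .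
qed

lemma V_term_tendsto:
  assumes "b \<in> VV"
  shows "((\<lambda>\<alpha>. (Nw U (wa z T \<alpha>) *v b) \<bullet> Av b) \<longlongrightarrow> 0) at_top"
proof -
  obtain c where c: "b = (\<Sum>j\<in>T. c$j *\<^sub>R column j U)"
    using assms unfolding VV_def R_apply by auto
  define C1 where "C1 = (\<Sum>j\<in>T. (c$j)\<^sup>2 / z$j)"
  define C2 where "C2 = q 1 (Av b)"
  have bound: "norm ((Nw U (wa z T \<alpha>) *v b) \<bullet> Av b) \<le> (C1 + C2) / (2 * sqrt \<alpha>)" if a: "\<alpha> \<ge> 1" for \<alpha>
  proof -
    have p: "\<forall>k. wa z T \<alpha> $ k > 0" using a wa_pos by auto
    have sa: "sqrt \<alpha> > 0" using a by simp
    have "2 * sqrt \<alpha> * \<bar>(Nw U (wa z T \<alpha>) *v b) \<bullet> Av b\<bar> \<le> (sqrt \<alpha>)\<^sup>2 * q \<alpha> b + q \<alpha> (Av b)"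
      by (rule N_cs[OF surjU p sa])
    also have "\<dots> = \<alpha> * q \<alpha> b + q \<alpha> (Av b)" using a by simp
    also have "\<dots> \<le> \<alpha> * (C1 / \<alpha>) + C2"
      unfolding C1_def C2_def using a qV[OF _ c, of \<alpha>] q_mono[of 1 \<alpha> "Av b"]
      by (intro add_mono mult_left_mono) auto
    also have "\<dots> = C1 + C2" using a by simp
    finally show ?thesis using sa by (simp add: field_simps)
  qed
  have "((\<lambda>\<alpha>. (C1 + C2) / (2 * sqrt \<alpha>)) \<longlongrightarrow> 0) at_top"
    by real_asymp
  then show ?thesis
  proof (rule Lim_null_comparison[rotated])
    show "\<forall>\<^sub>F x in at_top. norm ((Nw U (wa z T x) *v b) \<bullet> Av b) \<le> (C1 + C2) / (2 * sqrt x)"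
      by (rule eventually_at_top_linorderI[of 1]) (rule bound)
  qed
qed


lemma h_lim: "((progress U z T) \<longlongrightarrow> real (rank (restrict_cols U T))) at_top"
proof -
  obtain EV where EV: "EV \<subseteq> VV" "pairwise orthogonal EV" "\<And>x. x \<in> EV \<Longrightarrow> norm x = 1"
    "independent EV" "card EV = dim VV" "span EV = VV"
    using orthonormal_basis_subspace[OF VV_subspace] by metis
  obtain EW where EW: "EW \<subseteq> orthogonal_comp VV" "pairwise orthogonal EW" "\<And>x. x \<in> EW \<Longrightarrow> norm x = 1"
    "independent EW" "card EW = dim (orthogonal_comp VV)" "span EW = orthogonal_comp VV"
    using orthonormal_basis_subspace[OF subspace_orthogonal_comp] by metis
  have finV: "finite EV" and finW: "finite EW" using EV(4) EW(4) independent_imp_finite by auto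
  define E where "E = EV \<union> EW"
  have finE: "finite E" using finV finW E_def by auto
  have orthVW: "b \<bullet> c = 0" if "b \<in> EV" "c \<in> EW" for b c
    using that EV(1) EW(1) by (auto simp: orthogonal_comp_def orthogonal_def)
  have disj: "EV \<inter> EW = {}"
  proof (rule ccontr)
    assume "EV \<inter> EW \<noteq> {}"
    then obtain b where "b \<in> EV" "b \<in> EW" by auto
    then have "b \<bullet> b = 0" "norm b = 1" using orthVW EV(3) by auto
    then show False by simp
  qed
  have nrm: "b \<bullet> b = 1" if "b \<in> E" for b
    using that EV(3) EW(3) unfolding E_def by (auto simp: norm_eq_1)
  have pw: "pairwise orthogonal E"
    using EV(2) EW(2) orthVW unfolding E_def pairwise_def orthogonal_def
    by (auto simp: inner_commute[of _ "_::real^'d"] intro: orthVW) (metis inner_commute orthVW)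
  have ex: "(\<Sum>b\<in>E. (x \<bullet> b) *\<^sub>R b) = x" for x
  proof (rule orthonormal_basis_expand[OF pw _ _ finE])
    show "norm i = 1" if "i \<in> E" for i using that EV(3) EW(3) unfolding E_def by auto
    have "x \<in> VV + orthogonal_comp VV" using subspace_sum_orthogonal_comp[OF VV_subspace] by auto
    then obtain v w where vw: "v \<in> VV" "w \<in> orthogonal_comp VV" "x = v + w" by (meson set_plus_elim)
    have "v \<in> span E" using vw EV(6) span_mono[of EV E] unfolding E_def by auto
    moreover have "w \<in> span E" using vw EW(6) span_mono[of EW E] unfolding E_def by auto
    ultimately show "x \<in> span E" using vw span_add by auto
  qed
  have cardE: "real (card E) = real CARD('d)"
  proof -
    have "(\<Sum>j\<in>UNIV. wa z T 1 $ j * q 1 (column j U)) = real (card E)"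
      by (rule total_E[OF _ finE ex nrm]) auto
    moreover have "(\<Sum>j\<in>UNIV. wa z T 1 $ j * q 1 (column j U)) = real (card (Basis :: (real^'d) set))"
      by (rule total_E) (auto simp: euclidean_representation inner_Basis)
    ultimately show ?thesis by simp
  qed
  have cardE2: "card E = card EV + card EW" unfolding E_def by (rule card_Un_disjoint[OF finV finW disj])
  have gsplit: "g \<alpha> = real (card EW) + (\<Sum>b\<in>EV. (Nw U (wa z T \<alpha>) *v b) \<bullet> Av b)" if "\<alpha> > 0" for \<alpha>
  proof -
    have "g \<alpha> = (\<Sum>b\<in>E. (Nw U (wa z T \<alpha>) *v b) \<bullet> Av b)" by (rule g_E[OF that finE ex])
    also have "\<dots> = (\<Sum>b\<in>EV. (Nw U (wa z T \<alpha>) *v b) \<bullet> Av b) + (\<Sum>b\<in>EW. (Nw U (wa z T \<alpha>) *v b) \<bullet> Av b)"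
      unfolding E_def by (rule sum.union_disjoint[OF finV finW disj])
    also have "(\<Sum>b\<in>EW. (Nw U (wa z T \<alpha>) *v b) \<bullet> Av b) = (\<Sum>b\<in>EW. 1)"
      using W_term[OF that] EW(1) nrm unfolding E_def by (intro sum.cong) auto
    finally show ?thesis by simp
  qed
  have "((\<lambda>\<alpha>. real (card EW) + (\<Sum>b\<in>EV. (Nw U (wa z T \<alpha>) *v b) \<bullet> Av b)) \<longlongrightarrow> real (card EW) + 0) at_top"
    by (intro tendsto_add tendsto_const tendsto_null_sum V_term_tendsto) (use EV(1) in auto)
  then have "((\<lambda>\<alpha>. real CARD('d) - (real (card EW) + (\<Sum>b\<in>EV. (Nw U (wa z T \<alpha>) *v b) \<bullet> Av b)))
       \<longlongrightarrow> real CARD('d) - (real (card EW) + 0)) at_top"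
    by (intro tendsto_diff tendsto_const)
  moreover have "real CARD('d) - (real (card EW) + 0) = real (rank (restrict_cols U T))"
    using cardE cardE2 EV(5) by (simp add: rank_dim_range VV_def)
  moreover have "\<forall>\<^sub>F \<alpha> in at_top. real CARD('d) - (real (card EW) + (\<Sum>b\<in>EV. (Nw U (wa z T \<alpha>) *v b) \<bullet> Av b))
      = progress U z T \<alpha>"
    by (rule eventually_at_top_linorderI[of 1]) (simp add: h_eq gsplit)
  ultimately show ?thesis by (simp add: tendsto_cong)
qed


lemma h_mono: "mono_on {0<..} (progress U z T)"
proof (rule mono_onI)
  fix a b :: real assume "a \<in> {0<..}" "b \<in> {0<..}" "a \<le> b"
  then show "progress U z T a \<le> progress U z T b"
    using h_eq g_mono[of a b] by auto
qed

lemma h_cont: "continuous_on {1..} (progress U z T)"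
proof -
  have "continuous_on {1..} (\<lambda>\<alpha>. real CARD('d) - g \<alpha>)"
    by (intro continuous_on_diff continuous_on_const g_cont)
  then show ?thesis by (rule continuous_on_cong[THEN iffD1, rotated 2]) (auto simp: h_eq)
qed

lemma lev_total: "(\<Sum>j\<in>UNIV. lev U z j) = real CARD('d)"
proof -
  have "(\<Sum>j\<in>UNIV. wa z T 1 $ j * q 1 (column j U)) = real (card (Basis :: (real^'d) set))"
    by (rule total_E) (auto simp: euclidean_representation inner_Basis)
  then show ?thesis by (simp add: lev_Nw wa_1)
qed

lemma h_1: "progress U z T 1 = (\<Sum>j\<in>T. lev U z j)"
  by (simp add: progress_wa wa_1)

end

lemma inner_ind: "c \<bullet> ind_vec X = (\<Sum>j\<in>X. c$j)"
proof -
  have "c \<bullet> ind_vec X = (\<Sum>j\<in>UNIV. if j \<in> X then c$j else 0)"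
    unfolding inner_vec_def ind_vec_def by (intro sum.cong) auto
  then show ?thesis by (simp add: sum.If_cases)
qed

theorem proposition2p13:
  fixes U :: "real^'n^'d" and z c :: "real^'n" and T :: "'n set"
  assumes frame: "is_frame U"
    and zpos: "\<forall>j. z $ j > 0"
    and cpos: "\<forall>j. c $ j > 0"
    and csum: "c \<bullet> ind_vec UNIV = real CARD('d)"
    and Tne: "T \<noteq> {}" and Tproper: "T \<noteq> UNIV"
  shows "mono_on {0<..} (progress U z T)
    \<and> ((progress U z T) \<longlongrightarrow> real (rank (restrict_cols U T))) at_top
    \<and> (\<forall>\<gamma>. is_margin U z c T \<gamma> \<longrightarrow> c \<bullet> ind_vec T - progress U z T 1 \<ge> \<gamma>)
    \<and> (real (rank (restrict_cols U T)) \<ge> c \<bullet> ind_vec T \<longrightarrow>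
         (\<forall>\<gamma> \<delta>. is_margin U z c T \<gamma> \<longrightarrow> 0 \<le> \<delta> \<longrightarrow> \<delta> < \<gamma> \<longrightarrow>
            (\<exists>\<alpha>\<ge>1. progress U z T \<alpha> = progress U z T 1 + \<delta>)))"
proof -
  have surjU: "surj ((*v) U)" using frame by (simp add: is_frame_def full_rank_surjective)
  note mono = h_mono[OF surjU zpos]
  note lim = h_lim[OF surjU zpos]
  note cont = h_cont[OF surjU zpos, of T]
  have part3: "c \<bullet> ind_vec T - progress U z T 1 \<ge> \<gamma>" if m: "is_margin U z c T \<gamma>" for \<gamma>
  proof -
    define f where "f j = lev U z j - c$j" for j
    from m obtain \<nu> where g0: "\<gamma> \<ge> 0" and mx: "Max (f ` T) \<le> \<nu> - \<gamma>"
      and mn: "\<nu> + \<gamma> \<le> Min (f ` (- T))"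
      unfolding is_margin_def margin_feasible_def f_def by blast
    have fT: "f j \<le> \<nu> - \<gamma>" if "j \<in> T" for j
    proof -
      have "f j \<le> Max (f ` T)" by (rule Max_ge) (auto intro: that)
      then show ?thesis using mx by linarith
    qed
    have fnT: "\<nu> + \<gamma> \<le> f j" if "j \<notin> T" for j
    proof -
      have "Min (f ` (- T)) \<le> f j" by (rule Min_le) (use that in auto)
      then show ?thesis using mn by linarith
    qed
    define k1 where "k1 = real (card T)"
    define k2 where "k2 = real (card (- T))"
    have k1: "k1 \<ge> 1" using Tne unfolding k1_def
      by (metis One_nat_def Suc_leI card_gt_0_iff finite of_nat_1 of_nat_le_iff)
    have k2: "k2 \<ge> 1" using Tproper unfolding k2_def
      by (metis One_nat_def Suc_leI card_gt_0_iff finite of_nat_1 of_nat_le_iff Compl_empty_eq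
          double_compl)
    have s1: "(\<Sum>j\<in>T. f j) \<le> k1 * (\<nu> - \<gamma>)"
      using sum_mono[of T f "\<lambda>_. \<nu> - \<gamma>"] fT unfolding k1_def by auto
    have s2: "k2 * (\<nu> + \<gamma>) \<le> (\<Sum>j\<in>-T. f j)"
      using sum_mono[of "-T" "\<lambda>_. \<nu> + \<gamma>" f] fnT unfolding k2_def by auto
    have tot: "(\<Sum>j\<in>T. f j) + (\<Sum>j\<in>-T. f j) = 0"
    proof -
      have "(\<Sum>j\<in>T. f j) + (\<Sum>j\<in>-T. f j) = (\<Sum>j\<in>UNIV. f j)"
        by (subst sum.union_disjoint[symmetric]) (auto simp: Compl_partition)
      also have "\<dots> = (\<Sum>j\<in>UNIV. lev U z j) - (\<Sum>j\<in>UNIV. c$j)"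
        by (simp add: f_def sum_subtractf)
      also have "\<dots> = 0" using lev_total[OF surjU zpos] csum by (simp add: inner_ind)
      finally show ?thesis .
    qed
    have "(\<Sum>j\<in>T. f j) \<le> - \<gamma>"
    proof (cases "\<nu> \<ge> 0")
      case True
      have "\<nu> + \<gamma> \<le> k2 * (\<nu> + \<gamma>)" using k2 True g0 mult_right_mono[of 1 k2 "\<nu> + \<gamma>"] by simp
      then show ?thesis using s2 tot True by linarith
    next
      case False
      have "k1 * (\<nu> - \<gamma>) \<le> 1 * (\<nu> - \<gamma>)" using k1 False g0 by (intro mult_right_mono_neg) auto
      then have "(\<Sum>j\<in>T. f j) \<le> \<nu> - \<gamma>" using s1 by simp
      then show ?thesis using False g0 by linarith
    qed
    then show ?thesis
      by (simp add: h_1[OF surjU zpos] inner_ind f_def sum_subtractf)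
  qed
  have part4: "\<exists>\<alpha>\<ge>1. progress U z T \<alpha> = progress U z T 1 + \<delta>"
    if r: "real (rank (restrict_cols U T)) \<ge> c \<bullet> ind_vec T" and m: "is_margin U z c T \<gamma>"
      and d: "0 \<le> \<delta>" "\<delta> < \<gamma>" for \<gamma> \<delta>
  proof -
    have lt: "progress U z T 1 + \<delta> < real (rank (restrict_cols U T))"
      using part3[OF m] r d by linarith
    have "\<forall>\<^sub>F \<alpha> in at_top. progress U z T 1 + \<delta> < progress U z T \<alpha>"
      by (rule order_tendstoD(1)[OF lim lt])
    then obtain N where N: "\<And>\<alpha>. \<alpha> \<ge> N \<Longrightarrow> progress U z T 1 + \<delta> < progress U z T \<alpha>"
      by (auto simp: eventually_at_top_linorder)
    define \<beta> where "\<beta> = max N 1"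
    have b1: "\<beta> \<ge> 1" and hb: "progress U z T 1 + \<delta> \<le> progress U z T \<beta>"
      using N[of \<beta>] unfolding \<beta>_def by auto
    have "continuous_on {1..\<beta>} (progress U z T)"
      by (rule continuous_on_subset[OF cont]) auto
    then obtain x where "1 \<le> x" "x \<le> \<beta>" "progress U z T x = progress U z T 1 + \<delta>"
      using IVT'[of "progress U z T" 1 "progress U z T 1 + \<delta>" \<beta>] hb b1 d by auto
    then show ?thesis by auto
  qed
  show ?thesis using mono lim part3 part4 by blast
qed

end
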